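(* Let $N_x,N_y\ge3$, $\Delta x,\Delta y>0$, $\ell>0$. Consider the grid points $(i,j)$, $1\le i\le N_x$, $1\le j\le N_y$, with neighbor relation $(i,j)\sim(i',j')$ iff $|i-i'|+|j-j'|=1$; let $I$ be the set of interior points ($1<i<N_x$, $1<j<N_y$), $B_c$ the four corner points, and $B$ the remaining (non-corner) boundary points. Let positive numbers $D_{\frac{i+i'}{2},\frac{j+j'}{2}}>0$ be given for every neighboring pair, and numbers $\sigma_{i,j}\ge0$ for every grid point. With the index map $\mathcal I(i,j)=(i-1)N_y+j$, define the $N_xN_y\times N_xN_y$ matrix $\mathbf L$ by (writing $w_2(i,j;i',j')=|i-i'|\Delta x^2+|j-j'|\Delta y^2$ and $w_1(i,j;i',j')=|i-i'|\Delta x+|j-j'|\Delta y$, and $D'=D_{\frac{i+i'}{2},\frac{j+j'}{2}}$, $\tilde D=D_{\frac{i+\tilde i}{2},\frac{j+\tilde j}{2}}$): \begin{itemize} \item for $(i,j)\in I$: $\mathbf L_{\mathcal I(i,j),\mathcal I(i,j)}=\sum_{(\tilde i,\tilde j)\sim(i,j)}\tilde D/w_2(i,j;\tilde i,\tilde j)+\sigma_{i,j}$ and $\mathbf L_{\mathcal I(i,j),\mathcal I(i',j')}=-D'/w_2(i,j;i',j')$ for $(i',j')\sim(i,j)$; \item for $(i,j)\in B$: $\mathbf L_{\mathcal I(i,j),\mathcal I(i,j)}=1+\ell\sum_{(\tilde i,\tilde j)\in I,\,(\tilde i,\tilde j)\sim(i,j)}\tilde D/w_1(i,j;\tilde i,\tilde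 j)$ and $\mathbf L_{\mathcal I(i,j),\mathcal I(i',j')}=-\ell D'/w_1(i,j;i',j')$ for $(i',j')\in I$, $(i',j')\sim(i,j)$; \item for $(i,j)\in B_c$: $\mathbf L_{\mathcal I(i,j),\mathcal I(i,j)}=1+\frac{\sqrt2\ell}{2}\sum_{(\tilde i,\tilde j)\sim(i,j)}\tilde D/w_1(i,j;\tilde i,\tilde j)$ and $\mathbf L_{\mathcal I(i,j),\mathcal I(i',j')}=-\frac{\sqrt2\ell}{2}D'/w_1(i,j;i',j')$ for $(i',j')\sim(i,j)$; \item all other entries are $0$. \end{itemize} Then $\mathbf L$ is a weakly chained diagonally dominant (WCDD) matrix.
   Context: $\mathbf L$ is the staggered-grid finite difference matrix discretizing $-\nabla\cdot D\nabla u+\sigma_a u$ on $[x_1,x_{N_x}]\times[y_1,y_{N_y}]$ with the Robin condition $u+\ell\nu\cdot D\nabla u$ on the boundary (isotropic $D$ evaluated at edge midpoints). For a square matrix $A=(A_{kl})$, row $k$ is weakly diagonally dominant (WDD) if $|A_{kk}|\ge\sum_{l\ne k}|A_{kl}|$ and strictly diagonally dominant (SDD) if the inequality is strict; $A$ is WDD if all rows are WDD. $A$ is weakly chained diagonally dominant (WCDD) if $A$ is WDD and for each row $k$ that is not SDD there exist indices $k_1,\dots,k_p$ and $l$ such that $A_{kk_1},A_{k_1k_2},\dots,A_{k_{p-1}k_p},A_{k_pl}$ are all nonzero and row $l$ is SDD. *)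

theory Defs
  imports Complex_Main
begin

definition row_WDD :: "(nat \<Rightarrow> nat \<Rightarrow> real) \<Rightarrow> nat set \<Rightarrow> nat \<Rightarrow> bool" where
  "row_WDD A S k \<longleftrightarrow> \<bar>A k k\<bar> \<ge> (\<Sum>l\<in>S - {k}. \<bar>A k l\<bar>)"

definition row_SDD :: "(nat \<Rightarrow> nat \<Rightarrow> real) \<Rightarrow> nat set \<Rightarrow> nat \<Rightarrow> bool" where
  "row_SDD A S k \<longleftrightarrow> \<bar>A k k\<bar> > (\<Sum>l\<in>S - {k}. \<bar>A k l\<bar>)"

definition WDD :: "(nat \<Rightarrow> nat \<Rightarrow> real) \<Rightarrow> nat set \<Rightarrow> bool" where
  "WDD A S \<longleftrightarrow> (\<forall>k\<in>S. row_WDD A S k)"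

definition WCDD :: "(nat \<Rightarrow> nat \<Rightarrow> real) \<Rightarrow> nat set \<Rightarrow> bool" where
  "WCDD A S \<longleftrightarrow> WDD A S \<and>
     (\<forall>k\<in>S. \<not> row_SDD A S k \<longrightarrow>
        (\<exists>ps :: nat list. length ps \<ge> 2 \<and> hd ps = k \<and> set ps \<subseteq> S \<and>
           (\<forall>i. i + 1 < length ps \<longrightarrow> A (ps ! i) (ps ! (i + 1)) \<noteq> 0) \<and>
           row_SDD A S (last ps)))"

definition grid :: "nat \<Rightarrow> nat \<Rightarrow> (nat \<times> nat) set" where
  "grid Nx Ny = {1..Nx} \<times> {1..Ny}"

definition nbr :: "nat \<times> nat \<Rightarrow> nat \<times> nat \<Rightarrow> bool" where
  "nbr p q \<longleftrightarrow> \<bar>int (fst p) - int (fst q)\<bar> + \<bar>int (snd p) - int (snd q)\<bar> = 1"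

definition interior :: "nat \<Rightarrow> nat \<Rightarrow> (nat \<times> nat) set" where
  "interior Nx Ny = {1<..<Nx} \<times> {1<..<Ny}"

definition corners :: "nat \<Rightarrow> nat \<Rightarrow> (nat \<times> nat) set" where
  "corners Nx Ny = {(1,1), (1,Ny), (Nx,1), (Nx,Ny)}"

definition bdry :: "nat \<Rightarrow> nat \<Rightarrow> (nat \<times> nat) set" where
  "bdry Nx Ny = grid Nx Ny - interior Nx Ny - corners Nx Ny"

definition w2 :: "real \<Rightarrow> real \<Rightarrow> nat \<times> nat \<Rightarrow> nat \<times> nat \<Rightarrow> real" where
  "w2 dx dy p q = real (nat \<bar>int (fst p) - int (fst q)\<bar>) * dx\<^sup>2
                 + real (nat \<bar>int (snd p) - int (snd q)\<bar>) * dy\<^sup>2"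

definition w1 :: "real \<Rightarrow> real \<Rightarrow> nat \<times> nat \<Rightarrow> nat \<times> nat \<Rightarrow> real" where
  "w1 dx dy p q = real (nat \<bar>int (fst p) - int (fst q)\<bar>) * dx
                 + real (nat \<bar>int (snd p) - int (snd q)\<bar>) * dy"

definition Dmid :: "(real \<Rightarrow> real \<Rightarrow> real) \<Rightarrow> nat \<times> nat \<Rightarrow> nat \<times> nat \<Rightarrow> real" where
  "Dmid D p q = D ((real (fst p) + real (fst q)) / 2) ((real (snd p) + real (snd q)) / 2)"

definition Lgrid :: "nat \<Rightarrow> nat \<Rightarrow> real \<Rightarrow> real \<Rightarrow> real \<Rightarrow> (real \<Rightarrow> real \<Rightarrow> real)
    \<Rightarrow> (nat \<times> nat \<Rightarrow> real) \<Rightarrow> nat \<times> nat \<Rightarrow> nat \<times> nat \<Rightarrow> real" where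
  "Lgrid Nx Ny dx dy ell D \<sigma> p q =
    (if p \<in> interior Nx Ny then
       (if q = p then (\<Sum>t\<in>{t\<in>grid Nx Ny. nbr p t}. Dmid D p t / w2 dx dy p t) + \<sigma> p
        else if q \<in> grid Nx Ny \<and> nbr p q then - Dmid D p q / w2 dx dy p q
        else 0)
     else if p \<in> bdry Nx Ny then
       (if q = p then 1 + ell * (\<Sum>t\<in>{t\<in>interior Nx Ny. nbr p t}. Dmid D p t / w1 dx dy p t)
        else if q \<in> interior Nx Ny \<and> nbr p q then - ell * Dmid D p q / w1 dx dy p q
        else 0)
     else if p \<in> corners Nx Ny then
       (if q = p then 1 + sqrt 2 * ell / 2 * (\<Sum>t\<in>{t\<in>grid Nx Ny. nbr p t}. Dmid D p t / w1 dx dy p t)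
        else if q \<in> grid Nx Ny \<and> nbr p q then - (sqrt 2 * ell / 2) * Dmid D p q / w1 dx dy p q
        else 0)
     else 0)"

definition idx :: "nat \<Rightarrow> nat \<times> nat \<Rightarrow> nat" where
  "idx Ny p = (fst p - 1) * Ny + snd p"

definition gpt :: "nat \<Rightarrow> nat \<Rightarrow> nat \<times> nat" where
  "gpt Ny k = ((k - 1) div Ny + 1, (k - 1) mod Ny + 1)"

definition Lmat :: "nat \<Rightarrow> nat \<Rightarrow> real \<Rightarrow> real \<Rightarrow> real \<Rightarrow> (real \<Rightarrow> real \<Rightarrow> real)
    \<Rightarrow> (nat \<times> nat \<Rightarrow> real) \<Rightarrow> nat \<Rightarrow> nat \<Rightarrow> real" where
  "Lmat Nx Ny dx dy ell D \<sigma> k l = Lgrid Nx Ny dx dy ell D \<sigma> (gpt Ny k) (gpt Ny l)"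

end

theory Submission
  imports Defs
begin

lemma gpt_idx: "1 \<le> snd p \<Longrightarrow> snd p \<le> Ny \<Longrightarrow> 1 \<le> fst p \<Longrightarrow> gpt Ny (idx Ny p) = p"
proof -
  assume a: "1 \<le> snd p" "snd p \<le> Ny" "1 \<le> fst p"
  define x where "x = fst p - 1"
  define y where "y = snd p - 1"
  have p: "p = (Suc x, Suc y)" using a unfolding x_def y_def by (simp add: prod_eq_iff)
  have y: "y < Ny" using a p by simp
  have e: "idx Ny p - 1 = y + Ny * x" using p by (simp add: idx_def mult.commute)
  show ?thesis unfolding gpt_def e using y p by simp
qed

lemma idx_gpt: "1 \<le> k \<Longrightarrow> idx Ny (gpt Ny k) = k"
  unfolding gpt_def idx_def by simp

lemma gpt_grid: "k \<in> {1..Nx*Ny} \<Longrightarrow> gpt Ny k \<in> grid Nx Ny"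
proof -
  assume k: "k \<in> {1..Nx*Ny}"
  then have Ny: "Ny > 0" by (cases Ny) auto
  have "k - 1 < Nx * Ny" using k by auto
  then have "(k - 1) div Ny < Nx" using Ny by (simp add: div_less_iff_less_mult mult.commute)
  moreover have "(k - 1) mod Ny < Ny" using Ny by simp
  ultimately show ?thesis unfolding gpt_def grid_def by auto
qed

lemma idx_S: "p \<in> grid Nx Ny \<Longrightarrow> idx Ny p \<in> {1..Nx*Ny}"
proof -
  assume p: "p \<in> grid Nx Ny"
  then have "fst p - 1 \<le> Nx - 1" "snd p \<le> Ny" "1 \<le> snd p" "1 \<le> fst p" by (auto simp: grid_def)
  then have "(fst p - 1) * Ny + snd p \<le> (Nx - 1) * Ny + Ny" by (meson add_mono mult_le_mono1)
  also have "\<dots> = Nx * Ny" using \<open>1 \<le> fst p\<close> p by (cases Nx) (auto simp: grid_def)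
  finally show ?thesis using \<open>1 \<le> snd p\<close> unfolding idx_def by auto
qed

lemma nbr_ne: "nbr p q \<Longrightarrow> p \<noteq> q" by (auto simp: nbr_def)

lemma nbr_cases: "nbr p q \<Longrightarrow> (nat \<bar>int (fst p) - int (fst q)\<bar> = 1 \<and> nat \<bar>int (snd p) - int (snd q)\<bar> = 0) \<or>
   (nat \<bar>int (fst p) - int (fst q)\<bar> = 0 \<and> nat \<bar>int (snd p) - int (snd q)\<bar> = 1)"
  unfolding nbr_def by arith

lemma w2_pos: "dx > 0 \<Longrightarrow> dy > 0 \<Longrightarrow> nbr p q \<Longrightarrow> w2 dx dy p q > 0"
  using nbr_cases[of p q] unfolding w2_def by auto

lemma w1_pos: "dx > 0 \<Longrightarrow> dy > 0 \<Longrightarrow> nbr p q \<Longrightarrow> w1 dx dy p q > 0"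
  using nbr_cases[of p q] unfolding w1_def by auto


theorem proposition5p2:
  fixes Nx Ny :: nat and dx dy ell :: real
    and D :: "real \<Rightarrow> real \<Rightarrow> real" and \<sigma> :: "nat \<times> nat \<Rightarrow> real"
  assumes "Nx \<ge> 3" and "Ny \<ge> 3" and "dx > 0" and "dy > 0" and "ell > 0"
    and "\<And>p q. p \<in> grid Nx Ny \<Longrightarrow> q \<in> grid Nx Ny \<Longrightarrow> nbr p q \<Longrightarrow> Dmid D p q > 0"
    and "\<And>p. p \<in> grid Nx Ny \<Longrightarrow> \<sigma> p \<ge> 0"
  shows "WCDD (Lmat Nx Ny dx dy ell D \<sigma>) {1..Nx * Ny}"
proof -
  note Dpos = assms(6)
  let ?S = "{1..Nx*Ny}"
  let ?L = "Lmat Nx Ny dx dy ell D \<sigma>"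
  let ?G = "Lgrid Nx Ny dx dy ell D \<sigma>"
  have fin: "finite (grid Nx Ny)" by (simp add: grid_def)
  have int_grid: "interior Nx Ny \<subseteq> grid Nx Ny" by (auto simp: interior_def grid_def)
  have off: "(\<Sum>l\<in>?S-{k}. \<bar>?L k l\<bar>) = (\<Sum>q\<in>grid Nx Ny - {gpt Ny k}. \<bar>?G (gpt Ny k) q\<bar>)"
    if k: "k \<in> ?S" for k
    unfolding Lmat_def
  proof (rule sum.reindex_bij_witness[where i="idx Ny" and j="gpt Ny"])
    fix a assume a: "a \<in> ?S - {k}"
    then show "idx Ny (gpt Ny a) = a" by (simp add: idx_gpt)
    have "gpt Ny a \<noteq> gpt Ny k" using a k idx_gpt[of a Ny] idx_gpt[of k Ny] by auto
    then show "gpt Ny a \<in> grid Nx Ny - {gpt Ny k}" using a gpt_grid by auto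
  next
    fix b assume b: "b \<in> grid Nx Ny - {gpt Ny k}"
    then show gb: "gpt Ny (idx Ny b) = b" by (intro gpt_idx) (auto simp: grid_def)
    have "idx Ny b \<noteq> k" using gb b by auto
    then show "idx Ny b \<in> ?S - {k}" using b idx_S[of b Nx Ny] by auto
  qed simp
  have w2p: "nbr p q \<Longrightarrow> w2 dx dy p q > 0" for p q using w2_pos assms(3,4) by blast
  have w1p: "nbr p q \<Longrightarrow> w1 dx dy p q > 0" for p q using w1_pos assms(3,4) by blast
  have offI: "(\<Sum>q\<in>grid Nx Ny - {p}. \<bar>?G p q\<bar>) = (\<Sum>t\<in>{t\<in>grid Nx Ny. nbr p t}. Dmid D p t / w2 dx dy p t)"
    and diagI: "?G p p = (\<Sum>t\<in>{t\<in>grid Nx Ny. nbr p t}. Dmid D p t / w2 dx dy p t) + \<sigma> p"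
    if p: "p \<in> interior Nx Ny" for p
  proof -
    show "?G p p = (\<Sum>t\<in>{t\<in>grid Nx Ny. nbr p t}. Dmid D p t / w2 dx dy p t) + \<sigma> p"
      using p unfolding Lgrid_def by simp
    show "(\<Sum>q\<in>grid Nx Ny - {p}. \<bar>?G p q\<bar>) = (\<Sum>t\<in>{t\<in>grid Nx Ny. nbr p t}. Dmid D p t / w2 dx dy p t)"
    proof (rule sum.mono_neutral_cong_right)
      show "finite (grid Nx Ny - {p})" using fin by simp
      show "{t \<in> grid Nx Ny. nbr p t} \<subseteq> grid Nx Ny - {p}" using nbr_ne by auto
      show "\<forall>i\<in>grid Nx Ny - {p} - {t \<in> grid Nx Ny. nbr p t}. \<bar>?G p i\<bar> = 0"
        using p unfolding Lgrid_def by auto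
      fix x assume x: "x \<in> {t \<in> grid Nx Ny. nbr p t}"
      then have "Dmid D p x > 0" using Dpos p int_grid by blast
      moreover have "w2 dx dy p x > 0" using x w2p by auto
      ultimately show "\<bar>?G p x\<bar> = Dmid D p x / w2 dx dy p x"
        using p x nbr_ne[of p x] unfolding Lgrid_def by auto
    qed
  qed
  have offB: "(\<Sum>q\<in>grid Nx Ny - {p}. \<bar>?G p q\<bar>) = ell * (\<Sum>t\<in>{t\<in>interior Nx Ny. nbr p t}. Dmid D p t / w1 dx dy p t)"
    and diagB: "?G p p = 1 + ell * (\<Sum>t\<in>{t\<in>interior Nx Ny. nbr p t}. Dmid D p t / w1 dx dy p t)"
    if p: "p \<in> bdry Nx Ny" for p
  proof -
    have pn: "p \<notin> interior Nx Ny" "p \<in> grid Nx Ny" using p by (auto simp: bdry_def)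
    show "?G p p = 1 + ell * (\<Sum>t\<in>{t\<in>interior Nx Ny. nbr p t}. Dmid D p t / w1 dx dy p t)"
      using p pn unfolding Lgrid_def by simp
    have "(\<Sum>q\<in>grid Nx Ny - {p}. \<bar>?G p q\<bar>) = (\<Sum>t\<in>{t\<in>interior Nx Ny. nbr p t}. ell * (Dmid D p t / w1 dx dy p t))"
    proof (rule sum.mono_neutral_cong_right)
      show "finite (grid Nx Ny - {p})" using fin by simp
      show "{t \<in> interior Nx Ny. nbr p t} \<subseteq> grid Nx Ny - {p}" using nbr_ne int_grid by auto
      show "\<forall>i\<in>grid Nx Ny - {p} - {t \<in> interior Nx Ny. nbr p t}. \<bar>?G p i\<bar> = 0"
        using p pn unfolding Lgrid_def by auto
      fix x assume x: "x \<in> {t \<in> interior Nx Ny. nbr p t}"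
      then have "Dmid D p x > 0" using Dpos pn int_grid by blast
      moreover have "w1 dx dy p x > 0" using x w1p by auto
      ultimately show "\<bar>?G p x\<bar> = ell * (Dmid D p x / w1 dx dy p x)"
        using p pn x nbr_ne[of p x] assms(5) unfolding Lgrid_def by (auto simp: abs_mult)
    qed
    then show "(\<Sum>q\<in>grid Nx Ny - {p}. \<bar>?G p q\<bar>) = ell * (\<Sum>t\<in>{t\<in>interior Nx Ny. nbr p t}. Dmid D p t / w1 dx dy p t)"
      by (simp add: sum_distrib_left)
  qed
  have offC: "(\<Sum>q\<in>grid Nx Ny - {p}. \<bar>?G p q\<bar>) = sqrt 2 * ell / 2 * (\<Sum>t\<in>{t\<in>grid Nx Ny. nbr p t}. Dmid D p t / w1 dx dy p t)"
    and diagC: "?G p p = 1 + sqrt 2 * ell / 2 * (\<Sum>t\<in>{t\<in>grid Nx Ny. nbr p t}. Dmid D p t / w1 dx dy p t)"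
    if p: "p \<in> grid Nx Ny" "p \<notin> interior Nx Ny" "p \<notin> bdry Nx Ny" for p
  proof -
    have pc: "p \<in> corners Nx Ny" using p by (auto simp: bdry_def)
    show "?G p p = 1 + sqrt 2 * ell / 2 * (\<Sum>t\<in>{t\<in>grid Nx Ny. nbr p t}. Dmid D p t / w1 dx dy p t)"
      using p pc unfolding Lgrid_def by simp
    have c: "sqrt 2 * ell / 2 > 0" using assms(5) by simp
    have "(\<Sum>q\<in>grid Nx Ny - {p}. \<bar>?G p q\<bar>) = (\<Sum>t\<in>{t\<in>grid Nx Ny. nbr p t}. sqrt 2 * ell / 2 * (Dmid D p t / w1 dx dy p t))"
    proof (rule sum.mono_neutral_cong_right)
      show "finite (grid Nx Ny - {p})" using fin by simp
      show "{t \<in> grid Nx Ny. nbr p t} \<subseteq> grid Nx Ny - {p}" using nbr_ne by auto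
      show "\<forall>i\<in>grid Nx Ny - {p} - {t \<in> grid Nx Ny. nbr p t}. \<bar>?G p i\<bar> = 0"
        using p pc unfolding Lgrid_def by auto
      fix x assume x: "x \<in> {t \<in> grid Nx Ny. nbr p t}"
      then have d: "Dmid D p x > 0" using Dpos p by auto
      have w: "w1 dx dy p x > 0" using x w1p by auto
      have "?G p x = - (sqrt 2 * ell / 2) * Dmid D p x / w1 dx dy p x"
        using p pc x nbr_ne[of p x] unfolding Lgrid_def by auto
      also have "\<dots> = - (sqrt 2 * ell / 2 * (Dmid D p x / w1 dx dy p x))" by simp
      finally show "\<bar>?G p x\<bar> = sqrt 2 * ell / 2 * (Dmid D p x / w1 dx dy p x)"
        using c d w by simp
    qed
    then show "(\<Sum>q\<in>grid Nx Ny - {p}. \<bar>?G p q\<bar>) = sqrt 2 * ell / 2 * (\<Sum>t\<in>{t\<in>grid Nx Ny. nbr p t}. Dmid D p t / w1 dx dy p t)"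
      by (simp add: sum_distrib_left)
  qed
  have sumI_nn: "0 \<le> (\<Sum>t\<in>{t\<in>grid Nx Ny. nbr p t}. Dmid D p t / w2 dx dy p t)" if "p \<in> grid Nx Ny" for p
  proof (intro sum_nonneg)
    fix t assume t: "t \<in> {t\<in>grid Nx Ny. nbr p t}"
    then have "Dmid D p t > 0" using Dpos that by blast
    moreover have "w2 dx dy p t > 0" using w2p t by blast
    ultimately show "0 \<le> Dmid D p t / w2 dx dy p t" by simp
  qed
  have sumB_nn: "0 \<le> (\<Sum>t\<in>{t\<in>interior Nx Ny. nbr p t}. Dmid D p t / w1 dx dy p t)" if "p \<in> grid Nx Ny" for p
  proof (intro sum_nonneg)
    fix t assume t: "t \<in> {t\<in>interior Nx Ny. nbr p t}"
    then have "Dmid D p t > 0" using Dpos that int_grid by blast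
    moreover have "w1 dx dy p t > 0" using w1p t by blast
    ultimately show "0 \<le> Dmid D p t / w1 dx dy p t" by simp
  qed
  have sumC_nn: "0 \<le> (\<Sum>t\<in>{t\<in>grid Nx Ny. nbr p t}. Dmid D p t / w1 dx dy p t)" if "p \<in> grid Nx Ny" for p
  proof (intro sum_nonneg)
    fix t assume t: "t \<in> {t\<in>grid Nx Ny. nbr p t}"
    then have "Dmid D p t > 0" using Dpos that by blast
    moreover have "w1 dx dy p t > 0" using w1p t by blast
    ultimately show "0 \<le> Dmid D p t / w1 dx dy p t" by simp
  qed
  have diagL: "?L k k = ?G (gpt Ny k) (gpt Ny k)" for k by (simp add: Lmat_def)
  have sdd: "row_SDD ?L ?S k" if k: "k \<in> ?S" "gpt Ny k \<notin> interior Nx Ny" for k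
  proof -
    have pg: "gpt Ny k \<in> grid Nx Ny" using k gpt_grid by blast
    show ?thesis
    proof (cases "gpt Ny k \<in> bdry Nx Ny")
      case True
      then show ?thesis unfolding row_SDD_def diagL off[OF k(1)] offB[OF True] diagB[OF True]
        using sumB_nn[OF pg] assms(5) by simp
    next
      case False
      have c: "sqrt 2 * ell / 2 > 0" using assms(5) by simp
      show ?thesis unfolding row_SDD_def diagL off[OF k(1)] offC[OF pg k(2) False] diagC[OF pg k(2) False]
        using sumC_nn[OF pg] c by (simp add: abs_of_nonneg)
    qed
  qed
  have wddI: "row_WDD ?L ?S k" if k: "k \<in> ?S" "gpt Ny k \<in> interior Nx Ny" for k
  proof -
    have pg: "gpt Ny k \<in> grid Nx Ny" using k gpt_grid by blast
    show ?thesis unfolding row_WDD_def diagL off[OF k(1)] offI[OF k(2)] diagI[OF k(2)]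
      using sumI_nn[OF pg] assms(7)[OF pg] by simp
  qed
  have wdd: "WDD ?L ?S" unfolding WDD_def
  proof
    fix k assume k: "k \<in> ?S"
    show "row_WDD ?L ?S k"
    proof (cases "gpt Ny k \<in> interior Nx Ny")
      case True then show ?thesis using wddI k by blast
    next
      case False then show ?thesis using sdd[OF k False] unfolding row_SDD_def row_WDD_def by simp
    qed
  qed
  have chain: "\<exists>ps :: nat list. length ps \<ge> 2 \<and> hd ps = k \<and> set ps \<subseteq> ?S \<and>
           (\<forall>i. i + 1 < length ps \<longrightarrow> ?L (ps ! i) (ps ! (i + 1)) \<noteq> 0) \<and>
           row_SDD ?L ?S (last ps)" if k: "k \<in> ?S" "gpt Ny k \<in> interior Nx Ny" for k
  proof -
    obtain i j where ij: "gpt Ny k = (i, j)" by (cases "gpt Ny k")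
    have bnd: "1 < i" "i < Nx" "1 < j" "j < Ny" using k(2) ij by (auto simp: interior_def)
    define ps where "ps = map (\<lambda>m. idx Ny (i - m, j)) [0..<i]"
    have len: "length ps = i" by (simp add: ps_def)
    have nth: "ps ! m = idx Ny (i - m, j)" if "m < i" for m using that by (simp add: ps_def)
    have gi: "gpt Ny (idx Ny (a, j)) = (a, j)" if "1 \<le> a" for a using gpt_idx[of "(a,j)" Ny] that bnd by simp
    have hd: "hd ps = k"
    proof -
      have "ps \<noteq> []" using len bnd by auto
      then have "hd ps = ps ! 0" by (rule hd_conv_nth)
      also have "\<dots> = idx Ny (i, j)" using nth bnd by simp
      also have "\<dots> = k" using ij idx_gpt[of k Ny] k(1) by simp
      finally show ?thesis .
    qed
    have set: "set ps \<subseteq> ?S"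
    proof
      fix x assume "x \<in> set ps"
      then obtain m where m: "m < i" "x = idx Ny (i - m, j)" by (auto simp: ps_def)
      have "(i - m, j) \<in> grid Nx Ny" using m bnd by (auto simp: grid_def)
      then show "x \<in> ?S" using m idx_S by blast
    qed
    have step: "?L (ps ! m) (ps ! (m + 1)) \<noteq> 0" if m: "m + 1 < length ps" for m
    proof -
      have "?L (ps ! m) (ps ! (m + 1)) = ?G (i - m, j) (i - m - 1, j)"
        using m len nth[of m] nth[of "m+1"] gi[of "i - m"] gi[of "i - (m+1)"] by (simp add: Lmat_def)
      also have "\<dots> = - Dmid D (i - m, j) (i - m - 1, j) / w2 dx dy (i - m, j) (i - m - 1, j)"
      proof -
        have "(i - m, j) \<in> interior Nx Ny" using m len bnd by (auto simp: interior_def)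
        moreover have "(i - m - 1, j) \<in> grid Nx Ny" using m len bnd by (auto simp: grid_def)
        moreover have "nbr (i - m, j) (i - m - 1, j)" using m len by (auto simp: nbr_def)
        moreover have "(i - m - 1, j) \<noteq> (i - m, j)" using m len by auto
        ultimately show ?thesis unfolding Lgrid_def by simp
      qed
      also have "\<dots> \<noteq> 0"
      proof -
        have "(i - m, j) \<in> grid Nx Ny" using m len bnd by (auto simp: grid_def)
        moreover have "(i - m - 1, j) \<in> grid Nx Ny" using m len bnd by (auto simp: grid_def)
        moreover have n: "nbr (i - m, j) (i - m - 1, j)" using m len by (auto simp: nbr_def)
        ultimately have "Dmid D (i - m, j) (i - m - 1, j) > 0" using Dpos by blast
        moreover have "w2 dx dy (i - m, j) (i - m - 1, j) > 0" using w2p n by blast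
        ultimately show ?thesis by simp
      qed
      finally show ?thesis .
    qed
    have last: "last ps = idx Ny (1, j)"
    proof -
      have "ps \<noteq> []" using len bnd by auto
      then have "last ps = ps ! (length ps - 1)" by (rule last_conv_nth)
      then have "last ps = ps ! (i - 1)" using len by simp
      also have "\<dots> = idx Ny (1, j)" using nth[of "i - 1"] bnd by simp
      finally show ?thesis .
    qed
    have "row_SDD ?L ?S (idx Ny (1, j))"
    proof (rule sdd)
      show "idx Ny (1, j) \<in> ?S" using bnd by (intro idx_S) (auto simp: grid_def)
      show "gpt Ny (idx Ny (1, j)) \<notin> interior Nx Ny" using gi[of 1] by (simp add: interior_def)
    qed
    then show ?thesis using len bnd hd set step last by (intro exI[of _ ps]) auto
  qed
  show ?thesis unfolding WCDD_def
  proof (intro conjI wdd ballI impI)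
    fix k assume k: "k \<in> ?S" "\<not> row_SDD ?L ?S k"
    then have "gpt Ny k \<in> interior Nx Ny" using sdd by blast
    then show "\<exists>ps :: nat list. length ps \<ge> 2 \<and> hd ps = k \<and> set ps \<subseteq> ?S \<and>
           (\<forall>i. i + 1 < length ps \<longrightarrow> ?L (ps ! i) (ps ! (i + 1)) \<noteq> 0) \<and>
           row_SDD ?L ?S (last ps)" using chain k(1) by blast
  qed
qed

end
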